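(* Let $\lambda=2\cos(\pi/5)$, let $p$ be a rational prime and $n$ a positive integer. Then the images in $SL(2,\mathbb Z[\lambda]/p^{n+1}\mathbb Z[\lambda])$ of the matrices $$\begin{pmatrix}1&p^n\lambda^i\\0&1\end{pmatrix},\quad \begin{pmatrix}1&0\\-p^n\lambda^i&1\end{pmatrix},\quad \begin{pmatrix}1-p^n\lambda^{i+1}&p^n\lambda^{i+2}\\-p^n\lambda^i&1+p^n\lambda^{i+1}\end{pmatrix},\qquad i=0,1,$$ generate a group of order $p^6$.
   Context: $\lambda=2\cos(\pi/5)$ satisfies $\lambda^2=\lambda+1$; entries are reduced modulo the ideal $p^{n+1}\mathbb Z[\lambda]$. *)

theory Defs
  imports Complex_Main "HOL-Computational_Algebra.Primes" "HOL-Algebra.Generated_Groups"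
begin

text \<open>The ring Z[lambda], lambda = 2 cos(pi/5), lambda^2 = lambda + 1.
  Since lambda is an irrational quadratic integer, Z[lambda] is free over Z with basis 1, lambda;
  an element a + b*lambda is represented by the pair (a, b).\<close>

type_synonym zl = "int \<times> int"

definition zl_val :: "zl \<Rightarrow> real" where
  "zl_val x = of_int (fst x) + of_int (snd x) * (2 * cos (pi / 5))"

definition zl_lam :: zl where "zl_lam = (0, 1)"
definition zl_one :: zl where "zl_one = (1, 0)"
definition zl_zero :: zl where "zl_zero = (0, 0)"

fun zl_add :: "zl \<Rightarrow> zl \<Rightarrow> zl" where
  "zl_add (a, b) (c, d) = (a + c, b + d)"

fun zl_neg :: "zl \<Rightarrow> zl" where
  "zl_neg (a, b) = (- a, - b)"

text \<open>(a + b lambda)(c + d lambda) = ac + (ad + bc) lambda + bd (lambda + 1)\<close>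
fun zl_mul :: "zl \<Rightarrow> zl \<Rightarrow> zl" where
  "zl_mul (a, b) (c, d) = (a * c + b * d, a * d + b * c + b * d)"

fun zl_smul :: "int \<Rightarrow> zl \<Rightarrow> zl" where
  "zl_smul k (a, b) = (k * a, k * b)"

primrec zl_pow :: "zl \<Rightarrow> nat \<Rightarrow> zl" where
  "zl_pow x 0 = zl_one"
| "zl_pow x (Suc i) = zl_mul x (zl_pow x i)"

text \<open>Reduction modulo the ideal m Z[lambda] = m Z + m Z lambda: canonical representative.\<close>
fun zl_red :: "int \<Rightarrow> zl \<Rightarrow> zl" where
  "zl_red m (a, b) = (a mod m, b mod m)"

text \<open>2x2 matrices (a, b, c, d) = [[a, b], [c, d]] over Z[lambda].\<close>
type_synonym mat2 = "zl \<times> zl \<times> zl \<times> zl"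

fun mat_mul :: "mat2 \<Rightarrow> mat2 \<Rightarrow> mat2" where
  "mat_mul (a, b, c, d) (e, f, g, h) =
     (zl_add (zl_mul a e) (zl_mul b g), zl_add (zl_mul a f) (zl_mul b h),
      zl_add (zl_mul c e) (zl_mul d g), zl_add (zl_mul c f) (zl_mul d h))"

fun mat_det :: "mat2 \<Rightarrow> zl" where
  "mat_det (a, b, c, d) = zl_add (zl_mul a d) (zl_neg (zl_mul b c))"

fun mat_red :: "int \<Rightarrow> mat2 \<Rightarrow> mat2" where
  "mat_red m (a, b, c, d) = (zl_red m a, zl_red m b, zl_red m c, zl_red m d)"

definition mat_id :: mat2 where
  "mat_id = (zl_one, zl_zero, zl_zero, zl_one)"

text \<open>SL(2, Z[lambda] / m Z[lambda]), elements given by their canonical representatives.\<close>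
definition SL2_quot :: "int \<Rightarrow> mat2 monoid" where
  "SL2_quot m = \<lparr> carrier = {A. mat_red m A = A \<and> zl_red m (mat_det A) = zl_red m zl_one},
                  mult = (\<lambda>A B. mat_red m (mat_mul A B)),
                  one = mat_red m mat_id \<rparr>"

definition gen_mats :: "int \<Rightarrow> nat \<Rightarrow> mat2 set" where
  "gen_mats p n = (\<Union>i\<in>{0::nat, 1}.
     let t = (\<lambda>j. zl_smul (p ^ n) (zl_pow zl_lam j)) in
     { (zl_one, t i, zl_zero, zl_one),
       (zl_one, zl_zero, zl_neg (t i), zl_one),
       (zl_add zl_one (zl_neg (t (i + 1))), t (i + 2), zl_neg (t i), zl_add zl_one (t (i + 1))) })"

end

theory Submission
  imports Defs
begin

fun madd :: "mat2 \<Rightarrow> mat2 \<Rightarrow> mat2" where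
  "madd (a, b, c, d) (e, f, g, h) = (zl_add a e, zl_add b f, zl_add c g, zl_add d h)"
fun msmul :: "int \<Rightarrow> mat2 \<Rightarrow> mat2" where
  "msmul k (a, b, c, d) = (zl_smul k a, zl_smul k b, zl_smul k c, zl_smul k d)"
definition EE :: "int \<Rightarrow> int \<Rightarrow> mat2 \<Rightarrow> mat2" where
  "EE m q X = mat_red m (madd mat_id (msmul q X))"
definition Xf :: "int \<Rightarrow> int \<Rightarrow> int \<Rightarrow> int \<Rightarrow> int \<Rightarrow> int \<Rightarrow> mat2" where
  "Xf a1 a2 b1 b2 c1 c2 = ((-a1,-a2),(b1,b2),(c1,c2),(a1,a2))"

lemma mm: "(a mod m) = (a' mod m) \<Longrightarrow> (b mod m) = (b' mod m) \<Longrightarrow> (a*b) mod m = (a'*b') mod (m::int)"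
  by (metis mod_mult_eq)
lemma red_mul_l: "mat_red m (mat_mul (mat_red m A) B) = mat_red m (mat_mul A B)"
  by (cases A; cases B) (auto intro!: mod_add_cong mm)
lemma red_mul_r: "mat_red m (mat_mul A (mat_red m B)) = mat_red m (mat_mul A B)"
  by (cases A; cases B) (auto intro!: mod_add_cong mm)
lemma red_red: "mat_red m (mat_red m A) = mat_red m A"
  by (cases A) auto
lemma mul_assoc: "mat_mul (mat_mul A B) C = mat_mul A (mat_mul B C)"
  by (cases A; cases B; cases C) (auto simp: algebra_simps)
lemma mul_id_r: "mat_mul A mat_id = A"
  by (cases A) (auto simp: mat_id_def zl_one_def zl_zero_def)
lemma mul_id_l: "mat_mul mat_id A = A"
  by (cases A) (auto simp: mat_id_def zl_one_def zl_zero_def)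
lemma mul_E: "mat_mul (madd mat_id (msmul q X)) (madd mat_id (msmul q Y))
   = madd (madd mat_id (msmul q (madd X Y))) (msmul (q*q) (mat_mul X Y))"
  by (cases X; cases Y) (auto simp: mat_id_def zl_one_def zl_zero_def algebra_simps)
lemma red_add_m: "mat_red m (madd A (msmul (m*r) B)) = mat_red m A"
  by (cases A; cases B) (auto simp: mod_simps mult.assoc)
lemma EE_mult: assumes "q*q = m*r"
  shows "mat_red m (mat_mul (EE m q X) (EE m q Y)) = EE m q (madd X Y)"
  unfolding EE_def red_mul_l red_mul_r mul_E assms red_add_m ..
lemma EE_shift: assumes "m = q*p"
  shows "EE m q (madd X (msmul p Z)) = EE m q X"
proof -
  have "madd mat_id (msmul q (madd X (msmul p Z))) = madd (madd mat_id (msmul q X)) (msmul (m*1) Z)"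
    using assms by (cases X; cases Z) (auto simp: algebra_simps mat_id_def zl_one_def zl_zero_def)
  then show ?thesis unfolding EE_def using red_add_m[of m _ 1 Z] by simp
qed
lemma det_E: "mat_det (madd mat_id (msmul q (Xf a1 a2 b1 b2 c1 c2))) =
   zl_add zl_one (zl_smul (q*q) (mat_det (Xf a1 a2 b1 b2 c1 c2)))"
  by (auto simp: Xf_def mat_id_def zl_one_def zl_zero_def algebra_simps)

lemma red_det: "zl_red m (mat_det (mat_red m A)) = zl_red m (mat_det A)"
  by (cases A) (auto intro!: mod_add_cong mm mod_diff_cong mod_minus_cong)

lemma EE_carrier: assumes "q*q = m*r"
  shows "EE m q (Xf a1 a2 b1 b2 c1 c2) \<in> carrier (SL2_quot m)"
proof -
  have "zl_red m (zl_add zl_one (zl_smul (m*r) D)) = zl_red m zl_one" for D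
    by (cases D) (simp add: zl_one_def mult.assoc)
  then show ?thesis
    unfolding SL2_quot_def EE_def using det_E[of q] assms
    by (simp add: red_red red_det)
qed

lemma EE_zero: "EE m q (Xf 0 0 0 0 0 0) = mat_red m mat_id"
  by (simp add: EE_def Xf_def mat_id_def zl_one_def zl_zero_def)

lemma Xf_add: "madd (Xf a1 a2 b1 b2 c1 c2) (Xf a1' a2' b1' b2' c1' c2') =
  Xf (a1+a1') (a2+a2') (b1+b1') (b2+b2') (c1+c1') (c2+c2')"
  by (simp add: Xf_def)

lemma inv_EE: assumes "q*q = m*r"
  shows "inv\<^bsub>SL2_quot m\<^esub> (EE m q (Xf a1 a2 b1 b2 c1 c2)) = EE m q (Xf (-a1) (-a2) (-b1) (-b2) (-c1) (-c2))"
  unfolding m_inv_def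
proof (rule the_equality)
  let ?x = "EE m q (Xf a1 a2 b1 b2 c1 c2)"
  let ?y = "EE m q (Xf (-a1) (-a2) (-b1) (-b2) (-c1) (-c2))"
  have c: "?y \<in> carrier (SL2_quot m)" using EE_carrier[OF assms] .
  have m1: "mat_red m (mat_mul ?x ?y) = mat_red m mat_id"
    using EE_mult[OF assms] Xf_add EE_zero by simp
  have m2: "mat_red m (mat_mul ?y ?x) = mat_red m mat_id"
    using EE_mult[OF assms] Xf_add EE_zero by simp
  show "?y \<in> carrier (SL2_quot m) \<and> ?x \<otimes>\<^bsub>SL2_quot m\<^esub> ?y = \<one>\<^bsub>SL2_quot m\<^esub> \<and> ?y \<otimes>\<^bsub>SL2_quot m\<^esub> ?x = \<one>\<^bsub>SL2_quot m\<^esub>"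
    using c m1 m2 by (simp add: SL2_quot_def)
  fix z assume "z \<in> carrier (SL2_quot m) \<and> ?x \<otimes>\<^bsub>SL2_quot m\<^esub> z = \<one>\<^bsub>SL2_quot m\<^esub> \<and> z \<otimes>\<^bsub>SL2_quot m\<^esub> ?x = \<one>\<^bsub>SL2_quot m\<^esub>"
  then have zc: "mat_red m z = z" and zx: "mat_red m (mat_mul z ?x) = mat_red m mat_id"
    by (auto simp: SL2_quot_def)
  have "z = mat_red m (mat_mul z (mat_red m mat_id))"
    by (simp add: red_mul_r mul_id_r zc)
  also have "\<dots> = mat_red m (mat_mul z (mat_mul ?x ?y))"
    by (simp add: red_mul_r m1[symmetric])
  also have "\<dots> = mat_red m (mat_mul (mat_red m (mat_mul z ?x)) ?y)"
    by (simp add: red_mul_l mul_assoc)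
  also have "\<dots> = mat_red m (mat_mul (mat_red m mat_id) ?y)"
    by (simp only: zx)
  also have "\<dots> = ?y"
    by (simp only: red_mul_l mul_id_l EE_def red_red)
  finally show "z = ?y" .
qed

lemma gens_eq: "mat_red m ` gen_mats pp n = EE m (pp^n) ` {Xf 0 0 1 0 0 0, Xf 0 0 0 0 (-1) 0, Xf 0 1 1 1 (-1) 0,
   Xf 0 0 0 1 0 0, Xf 0 0 0 0 0 (-1), Xf 1 1 1 2 0 (-1)}"
  by (simp add: gen_mats_def EE_def Xf_def mat_id_def zl_one_def zl_zero_def zl_lam_def eval_nat_numeral insert_commute)

lemma small_dvd: "(p::int) dvd d \<Longrightarrow> \<bar>d\<bar> < p \<Longrightarrow> d = 0"
proof (rule ccontr)
  assume "p dvd d" "\<bar>d\<bar> < p" "d \<noteq> 0"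
  then have "\<bar>p\<bar> \<le> \<bar>d\<bar>" using dvd_imp_le_int by blast
  then show False using \<open>\<bar>d\<bar> < p\<close> by linarith
qed

lemma inj_comp: assumes "m = q*p" "q \<noteq> 0" "(c + q*x) mod m = (c + q*y) mod m"
  "0 \<le> x" "x < p" "0 \<le> y" "y < p" shows "x = (y::int)"
proof -
  have "q*p dvd q*(x-y)" using assms(1,3) mod_eq_dvd_iff[of "c+q*x" m "c+q*y"]
    by (simp add: algebra_simps)
  then have "p dvd x - y" using assms(2) by simp
  then show ?thesis using small_dvd[of p "x-y"] assms by auto
qed

lemma gen_smul:
  assumes one: "mat_red m mat_id \<in> Gen"
    and add: "\<And>A B. EE m q A \<in> Gen \<Longrightarrow> EE m q B \<in> Gen \<Longrightarrow> EE m q (madd A B) \<in> Gen"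
    and pos: "EE m q X \<in> Gen" and neg: "EE m q (msmul (-1) X) \<in> Gen"
  shows "EE m q (msmul c X) \<in> Gen"
proof -
  have z: "EE m q (msmul 0 X) = mat_red m mat_id"
  proof -
    obtain a1 a2 b1 b2 c1 c2 d1 d2 where "X = ((a1,a2),(b1,b2),(c1,c2),(d1,d2))" by (metis prod.exhaust)
    then show ?thesis by (simp add: EE_def mat_id_def zl_one_def zl_zero_def)
  qed
  obtain a1 a2 b1 b2 c1 c2 d1 d2 where XX: "X = ((a1,a2),(b1,b2),(c1,c2),(d1,d2))" by (metis prod.exhaust)
  have K: "EE m q (msmul (int k) X) \<in> Gen \<and> EE m q (msmul (- int k) X) \<in> Gen" for k
  proof (induction k)
    case 0 then show ?case using one z by simp
  next
    case (Suc k)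
    have e1: "msmul (int (Suc k)) X = madd X (msmul (int k) X)"
      by (simp add: XX algebra_simps)
    have e2: "msmul (- int (Suc k)) X = madd (msmul (-1) X) (msmul (- int k) X)"
      by (simp add: XX algebra_simps)
    show ?case unfolding e1 e2 using Suc add pos neg by blast
  qed
  show ?thesis
  proof (cases "c \<ge> 0")
    case True then show ?thesis using K[of "nat c"] by simp
  next
    case False then show ?thesis using K[of "nat (-c)"] by simp
  qed
qed

theorem lemmaA:
  fixes p n :: nat
  assumes "prime p" and "n > 0"
  shows "card (generate (SL2_quot (int p ^ (n + 1)))
                 (mat_red (int p ^ (n + 1)) ` gen_mats (int p) n)) = p ^ 6"
proof -
  define m where "m = int p ^ (n+1)"
  define q where "q = int p ^ n"
  define r where "r = int p ^ (n-1)"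
  have p2: "p \<ge> 2" using assms(1) prime_ge_2_nat by blast
  have mq: "m = q * int p" by (simp add: m_def q_def)
  have qq: "q*q = m*r"
  proof -
    obtain k where "n = Suc k" using assms(2) gr0_implies_Suc by blast
    then show ?thesis by (simp add: m_def q_def r_def power_add[symmetric])
  qed
  have q0: "q \<noteq> 0" using p2 by (simp add: q_def)
  define G where "G = SL2_quot m"
  define H where "H = mat_red m ` gen_mats (int p) n"
  have H6: "H = EE m q ` {Xf 0 0 1 0 0 0, Xf 0 0 0 0 (-1) 0, Xf 0 1 1 1 (-1) 0,
   Xf 0 0 0 1 0 0, Xf 0 0 0 0 0 (-1), Xf 1 1 1 2 0 (-1)}"
    unfolding H_def q_def by (rule gens_eq)
  define T where "T = {EE m q (Xf a1 a2 b1 b2 c1 c2) | a1 a2 b1 b2 c1 c2. True}"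
  have oneG: "\<one>\<^bsub>G\<^esub> = mat_red m mat_id" by (simp add: G_def SL2_quot_def)
  have multG: "x \<otimes>\<^bsub>G\<^esub> y = mat_red m (mat_mul x y)" for x y by (simp add: G_def SL2_quot_def)
  have sub1: "generate G H \<subseteq> T"
  proof
    fix x assume "x \<in> generate G H"
    then show "x \<in> T"
    proof induction
      case one
      then show ?case unfolding oneG T_def using EE_zero[symmetric] by blast
    next
      case (incl h)
      then show ?case unfolding H6 T_def by blast
    next
      case (inv h)
      then show ?case unfolding H6 T_def G_def using inv_EE[OF qq] by (auto; blast)
    next
      case (eng h1 h2)
      then obtain a1 a2 b1 b2 c1 c2 a1' a2' b1' b2' c1' c2' where
        "h1 = EE m q (Xf a1 a2 b1 b2 c1 c2)" "h2 = EE m q (Xf a1' a2' b1' b2' c1' c2')"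
        unfolding T_def by blast
      then show ?case unfolding multG T_def using EE_mult[OF qq] Xf_add by (auto; blast)
    qed
  qed
  have sub2: "T \<subseteq> generate G H"
  proof
    fix x assume "x \<in> T"
    then obtain a1 a2 b1 b2 c1 c2 where x: "x = EE m q (Xf a1 a2 b1 b2 c1 c2)"
      unfolding T_def by blast
    let ?Gen = "generate G H"
    have one: "mat_red m mat_id \<in> ?Gen" using generate.one[of G H] oneG by simp
    have add: "EE m q (madd A B) \<in> ?Gen" if "EE m q A \<in> ?Gen" "EE m q B \<in> ?Gen" for A B
      using generate.eng[OF that] EE_mult[OF qq] multG by simp
    have gen: "EE m q (msmul c (Xf g1 g2 g3 g4 g5 g6)) \<in> ?Gen"
      if "Xf g1 g2 g3 g4 g5 g6 \<in> {Xf 0 0 1 0 0 0, Xf 0 0 0 0 (-1) 0, Xf 0 1 1 1 (-1) 0,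
   Xf 0 0 0 1 0 0, Xf 0 0 0 0 0 (-1), Xf 1 1 1 2 0 (-1)}" for c g1 g2 g3 g4 g5 g6
    proof (rule gen_smul[OF one add])
      show "EE m q (Xf g1 g2 g3 g4 g5 g6) \<in> ?Gen"
        using generate.incl[of _ H G] that H6 by blast
      have "inv\<^bsub>G\<^esub> (EE m q (Xf g1 g2 g3 g4 g5 g6)) \<in> ?Gen"
        using generate.inv[of _ H G] that H6 by blast
      moreover have "msmul (-1) (Xf g1 g2 g3 g4 g5 g6) = Xf (-g1) (-g2) (-g3) (-g4) (-g5) (-g6)"
        by (simp add: Xf_def)
      ultimately show "EE m q (msmul (-1) (Xf g1 g2 g3 g4 g5 g6)) \<in> ?Gen"
        using inv_EE[OF qq] G_def by simp
    qed (auto)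
    define r0 where "r0 = a1"
    define s where "s = a2 - a1"
    define u where "u = b1 - s - r0"
    define v where "v = b2 - s - 2*r0"
    define w where "w = -c1 - s"
    define z where "z = -c2 - r0"
    have dec: "Xf a1 a2 b1 b2 c1 c2 = madd (msmul r0 (Xf 1 1 1 2 0 (-1))) (madd (msmul s (Xf 0 1 1 1 (-1) 0))
       (madd (msmul u (Xf 0 0 1 0 0 0)) (madd (msmul v (Xf 0 0 0 1 0 0))
       (madd (msmul w (Xf 0 0 0 0 (-1) 0)) (msmul z (Xf 0 0 0 0 0 (-1)))))))"
      by (simp add: Xf_def r0_def s_def u_def v_def w_def z_def algebra_simps)
    show "x \<in> ?Gen" unfolding x dec
      by (intro add gen) auto
  qed
  have gT: "generate G H = T" using sub1 sub2 by blast
  define B where "B = {0..<int p}"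
  define f where "f = (\<lambda>(a1,a2,b1,b2,c1,c2). EE m q (Xf a1 a2 b1 b2 c1 c2))"
  have TB: "T = f ` (B \<times> B \<times> B \<times> B \<times> B \<times> B)"
  proof
    show "f ` (B \<times> B \<times> B \<times> B \<times> B \<times> B) \<subseteq> T" unfolding T_def f_def by (auto; blast)
    show "T \<subseteq> f ` (B \<times> B \<times> B \<times> B \<times> B \<times> B)"
    proof
      fix x assume "x \<in> T"
      then obtain a1 a2 b1 b2 c1 c2 where x: "x = EE m q (Xf a1 a2 b1 b2 c1 c2)"
        unfolding T_def by blast
      let ?P = "int p"
      have "Xf a1 a2 b1 b2 c1 c2 = madd (Xf (a1 mod ?P) (a2 mod ?P) (b1 mod ?P) (b2 mod ?P) (c1 mod ?P) (c2 mod ?P))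
         (msmul ?P (Xf (a1 div ?P) (a2 div ?P) (b1 div ?P) (b2 div ?P) (c1 div ?P) (c2 div ?P)))"
        by (simp add: Xf_def) (use mod_mult_div_eq[of a1 "int p"] mod_mult_div_eq[of a2 "int p"] in linarith)
      then have "x = EE m q (Xf (a1 mod ?P) (a2 mod ?P) (b1 mod ?P) (b2 mod ?P) (c1 mod ?P) (c2 mod ?P))"
        using x EE_shift[OF mq] by simp
      moreover have "(a1 mod ?P, a2 mod ?P, b1 mod ?P, b2 mod ?P, c1 mod ?P, c2 mod ?P) \<in> B \<times> B \<times> B \<times> B \<times> B \<times> B"
        using p2 by (simp add: B_def)
      ultimately show "x \<in> f ` (B \<times> B \<times> B \<times> B \<times> B \<times> B)" unfolding f_def by force
    qed
  qed
  have inj: "inj_on f (B \<times> B \<times> B \<times> B \<times> B \<times> B)"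
  proof (rule inj_onI)
    fix x y assume xin: "x \<in> B \<times> B \<times> B \<times> B \<times> B \<times> B" and yin: "y \<in> B \<times> B \<times> B \<times> B \<times> B \<times> B"
      and eq: "f x = f y"
    obtain a1 a2 b1 b2 c1 c2 where xx: "x = (a1,a2,b1,b2,c1,c2)" by (metis prod.exhaust)
    obtain a1' a2' b1' b2' c1' c2' where yy: "y = (a1',a2',b1',b2',c1',c2')" by (metis prod.exhaust)
    have e: "(1 + q*a1) mod m = (1 + q*a1') mod m" "(0 + q*a2) mod m = (0 + q*a2') mod m"
      "(0 + q*b1) mod m = (0 + q*b1') mod m" "(0 + q*b2) mod m = (0 + q*b2') mod m"
      "(0 + q*c1) mod m = (0 + q*c1') mod m" "(0 + q*c2) mod m = (0 + q*c2') mod m"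
      using eq by (auto simp: xx yy f_def EE_def Xf_def mat_id_def zl_one_def zl_zero_def)
    show "x = y"
      using inj_comp[OF mq q0 e(1)] inj_comp[OF mq q0 e(2)] inj_comp[OF mq q0 e(3)]
        inj_comp[OF mq q0 e(4)] inj_comp[OF mq q0 e(5)] inj_comp[OF mq q0 e(6)] xin yin
      by (auto simp: B_def xx yy)
  qed
  have cB: "card B = p" by (simp add: B_def)
  have "card (generate G H) = p^6"
    unfolding gT TB card_image[OF inj] by (simp add: card_cartesian_product cB eval_nat_numeral)
  then show ?thesis unfolding G_def H_def m_def .
qed

end
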